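(* Let $X=\{\mathbf{x}_1,\ldots,\mathbf{x}_N\}\subset\mathbb{R}^n$, $\epsilon\ge0$, $\sigma$ a degree-compatible term ordering, and let $(\mathcal{O},G)$ be the output of the ABM algorithm with gradient-weighted normalization (described in the context) on $(X,\epsilon,\sigma)$. Let $P=\{\mathbf{p}_1,\ldots,\mathbf{p}_N\}\subset\mathbb{R}^n$ be perturbations and $X+P=\{\mathbf{x}_1+\mathbf{p}_1,\ldots,\mathbf{x}_N+\mathbf{p}_N\}$, and put $\|P\|_{\max}=\max_i\|\mathbf{p}_i\|$. If $g\in G$ is gradient-weighted unitary, then $$\|g(X+P)\|\le\epsilon+\|P\|_{\max}\deg(g)\sqrt{|X|}+o(\|P\|_{\max})\quad\text{as }\|P\|_{\max}\to0.$$
   Context: For a polynomial $h$, $h(X)=(h(\mathbf{x}_1),\ldots,h(\mathbf{x}_N))^\top$ and $\|\cdot\|$ is the Euclidean norm; $o(\cdot)$ is Landau's little-o. Gradient norm: $\|g\|_{g,X}=\sqrt{\sum_{\mathbf{x}\in X}\|\nabla g(\mathbf{x})\|^2}/\sqrt{\sum_{k=1}^n\deg_k(g)^2}$, and $0$ for constant $g$. Gradient-weighted norm of $g=\sum_ic_it_i$ (distinct terms $t_i$): $\|g\|_{\mathrm{gw},X}=\sqrt{\sum_ic_i^2\|t_i\|_{g,X}^2}$; gradient-weighted unitary means this equals $1$. Border of a set of terms: $\partial\mathcal{O}=(\bigcup_kx_k\mathcal{O})\setminus\mathcal{O}$. ABM algorithm with gradient-weighted normalization, input $(X,\epsilon,\sigma)$: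 initialize $G=\emptyset$, $\mathcal{O}=\{1\}$. For $d=1,2,\ldots$: set $L=\{b\in\partial\mathcal{O}:\deg b=d\}$; if $L=\emptyset$, output $(\mathcal{O},G)$ and stop. Otherwise repeat until $L$ is empty: (S1) take the $\sigma$-smallest $b\in L$ and remove it; (S2) with current $\mathcal{O}=\{o_1,\ldots,o_s\}$, let $M=(b(X)\ o_1(X)\ \cdots\ o_s(X))$, $D=\mathrm{diag}(\|b\|_{\mathrm{gw},X},\|o_1\|_{\mathrm{gw},X},\ldots,\|o_s\|_{\mathrm{gw},X})$, and compute the smallest generalized eigenvalue $\lambda_{\min}$ and eigenvector $\mathbf{v}_{\min}=(v_1,\ldots,v_{s+1})^\top$ of $M^\top M\mathbf{v}=\lambda D^2\mathbf{v}$ with $\mathbf{v}_{\min}^\top D^2\mathbf{v}_{\min}=1$; (S3) if $\sqrt{\lambda_{\min}}\le\epsilon$, add $g=v_1b+v_2o_1+\cdots+v_{s+1}o_s$ to $G$; else add $b$ to $\mathcal{O}$. *)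

theory Defs
  imports "HOL-Analysis.Analysis"
begin

text \<open>Terms (monomials) in the variables indexed by the finite type 'n are exponent
  vectors; polynomials are coefficient functions on terms (with finite support).
  Points of R^n are elements of real^'n.\<close>

type_synonym 'n monom = "'n \<Rightarrow> nat"
type_synonym 'n mpoly = "('n \<Rightarrow> nat) \<Rightarrow> real"

definition supp :: "'n mpoly \<Rightarrow> 'n monom set" where
  "supp c = {a. c a \<noteq> 0}"

definition monom_poly :: "'n monom \<Rightarrow> 'n mpoly" where
  "monom_poly t = (\<lambda>a. if a = t then 1 else 0)"

definition mono_eval :: "('n::finite) monom \<Rightarrow> real^'n \<Rightarrow> real" where
  "mono_eval a x = (\<Prod>k\<in>UNIV. (x$k) ^ (a k))"

definition poly_eval :: "('n::finite) mpoly \<Rightarrow> real^'n \<Rightarrow> real" where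
  "poly_eval c x = (\<Sum>a\<in>supp c. c a * mono_eval a x)"

definition mono_pderiv :: "('n::finite) monom \<Rightarrow> 'n \<Rightarrow> real^'n \<Rightarrow> real" where
  "mono_pderiv a k x =
     real (a k) * (x$k) ^ (a k - 1) * (\<Prod>j\<in>UNIV - {k}. (x$j) ^ (a j))"

definition poly_grad :: "('n::finite) mpoly \<Rightarrow> real^'n \<Rightarrow> real^'n" where
  "poly_grad c x = (\<chi> k. \<Sum>a\<in>supp c. c a * mono_pderiv a k x)"

definition tdeg :: "('n::finite) monom \<Rightarrow> nat" where
  "tdeg a = (\<Sum>k\<in>UNIV. a k)"

definition poly_deg :: "('n::finite) mpoly \<Rightarrow> nat" where
  "poly_deg c = Max (insert 0 (tdeg ` supp c))"

definition poly_deg_var :: "('n::finite) mpoly \<Rightarrow> 'n \<Rightarrow> nat" where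
  "poly_deg_var c k = Max (insert 0 ((\<lambda>a. a k) ` supp c))"

definition is_constant :: "('n::finite) mpoly \<Rightarrow> bool" where
  "is_constant c \<longleftrightarrow> supp c \<subseteq> {(\<lambda>_. 0)}"

text \<open>the data set X = {x_1,...,x_N} is given by an injective map from a finite index type 'm\<close>

definition grad_norm :: "('n::finite) mpoly \<Rightarrow> ('m::finite \<Rightarrow> real^'n) \<Rightarrow> real" where
  "grad_norm c X =
     (if is_constant c then 0
      else sqrt (\<Sum>i\<in>UNIV. (norm (poly_grad c (X i)))\<^sup>2)
           / sqrt (\<Sum>k\<in>UNIV. (real (poly_deg_var c k))\<^sup>2))"

definition gw_norm :: "('n::finite) mpoly \<Rightarrow> ('m::finite \<Rightarrow> real^'n) \<Rightarrow> real" where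
  "gw_norm c X = sqrt (\<Sum>a\<in>supp c. (c a)\<^sup>2 * (grad_norm (monom_poly a) X)\<^sup>2)"

definition eval_norm :: "('n::finite) mpoly \<Rightarrow> ('m::finite \<Rightarrow> real^'n) \<Rightarrow> real" where
  "eval_norm c X = sqrt (\<Sum>i\<in>UNIV. (poly_eval c (X i))\<^sup>2)"

definition mult_var :: "'n \<Rightarrow> 'n monom \<Rightarrow> 'n monom" where
  "mult_var k a = a(k := Suc (a k))"

definition border :: "'n monom set \<Rightarrow> 'n monom set" where
  "border Os = (\<Union>k. mult_var k ` Os) - Os"

definition deg_compat_term_order :: "(('n::finite) monom \<Rightarrow> 'n monom \<Rightarrow> bool) \<Rightarrow> bool" where
  "deg_compat_term_order lt \<longleftrightarrow>
     (\<forall>a. \<not> lt a a) \<and>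
     (\<forall>a b c. lt a b \<longrightarrow> lt b c \<longrightarrow> lt a c) \<and>
     (\<forall>a b. a \<noteq> b \<longrightarrow> lt a b \<or> lt b a) \<and>
     (\<forall>a. a \<noteq> (\<lambda>_. 0) \<longrightarrow> lt (\<lambda>_. 0) a) \<and>
     (\<forall>a b c. lt a b \<longrightarrow> lt (\<lambda>k. a k + c k) (\<lambda>k. b k + c k)) \<and>
     (\<forall>a b. tdeg a < tdeg b \<longrightarrow> lt a b)"

text \<open>Generalized eigenproblem M^T M v = lambda D^2 v with v^T D^2 v = 1, where the columns
  of M (and the diagonal of D) are indexed by the terms T = {b} \<union> Os.\<close>
definition gen_eig :: "('m::finite \<Rightarrow> real^'n::finite) \<Rightarrow> 'n monom set \<Rightarrow> real \<Rightarrow> 'n mpoly \<Rightarrow> bool" where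
  "gen_eig X T lam v \<longleftrightarrow>
     (\<forall>u\<in>T. (\<Sum>w\<in>T. (\<Sum>i\<in>UNIV. mono_eval u (X i) * mono_eval w (X i)) * v w)
              = lam * (gw_norm (monom_poly u) X)\<^sup>2 * v u) \<and>
     (\<Sum>u\<in>T. (gw_norm (monom_poly u) X)\<^sup>2 * (v u)\<^sup>2) = 1"

definition min_gen_eig :: "('m::finite \<Rightarrow> real^'n::finite) \<Rightarrow> 'n monom set \<Rightarrow> real \<Rightarrow> 'n mpoly \<Rightarrow> bool" where
  "min_gen_eig X T lam v \<longleftrightarrow>
     gen_eig X T lam v \<and> (\<forall>lam' v'. gen_eig X T lam' v' \<longrightarrow> lam \<le> lam')"

text \<open>Runs of the ABM algorithm with gradient-weighted normalization.
  abm_run X eps lt d L Os G Of Gf: being inside degree d with remaining candidate set L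
  and current (Os, G), the algorithm can terminate with output (Of, Gf).
  The choice of the eigenvector is left nondeterministic.\<close>
inductive abm_run ::
  "('m::finite \<Rightarrow> real^'n::finite) \<Rightarrow> real \<Rightarrow> ('n monom \<Rightarrow> 'n monom \<Rightarrow> bool) \<Rightarrow> nat
   \<Rightarrow> 'n monom set \<Rightarrow> 'n monom set \<Rightarrow> 'n mpoly set \<Rightarrow> 'n monom set \<Rightarrow> 'n mpoly set \<Rightarrow> bool"
  for X eps lt where
  stop: "{b\<in>border Os. tdeg b = Suc d} = {} \<Longrightarrow> abm_run X eps lt d {} Os G Os G"
| next_deg: "{b\<in>border Os. tdeg b = Suc d} \<noteq> {} \<Longrightarrow>
     abm_run X eps lt (Suc d) {b\<in>border Os. tdeg b = Suc d} Os G Of Gf \<Longrightarrow>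
     abm_run X eps lt d {} Os G Of Gf"
| add_G: "b \<in> L \<Longrightarrow> (\<forall>b'\<in>L. b' \<noteq> b \<longrightarrow> lt b b') \<Longrightarrow>
     min_gen_eig X (insert b Os) lam v \<Longrightarrow> sqrt lam \<le> eps \<Longrightarrow>
     abm_run X eps lt d (L - {b}) Os
        (insert (\<lambda>a. if a \<in> insert b Os then v a else 0) G) Of Gf \<Longrightarrow>
     abm_run X eps lt d L Os G Of Gf"
| add_O: "b \<in> L \<Longrightarrow> (\<forall>b'\<in>L. b' \<noteq> b \<longrightarrow> lt b b') \<Longrightarrow>
     min_gen_eig X (insert b Os) lam v \<Longrightarrow> \<not> sqrt lam \<le> eps \<Longrightarrow>
     abm_run X eps lt d (L - {b}) (insert b Os) G Of Gf \<Longrightarrow>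
     abm_run X eps lt d L Os G Of Gf"

definition abm_output ::
  "('m::finite \<Rightarrow> real^'n::finite) \<Rightarrow> real \<Rightarrow> ('n monom \<Rightarrow> 'n monom \<Rightarrow> bool)
   \<Rightarrow> 'n monom set \<Rightarrow> 'n mpoly set \<Rightarrow> bool" where
  "abm_output X eps lt Of Gf \<longleftrightarrow> abm_run X eps lt 0 {} {(\<lambda>_. 0)} {} Of Gf"

definition pmax :: "('m::finite \<Rightarrow> real^'n) \<Rightarrow> real" where
  "pmax P = Max (range (\<lambda>i. norm (P i)))"

end

theory Submission
  imports Defs
begin


lemma mono_eval_deriv:
  fixes a :: "('n::finite) monom"
  shows "(mono_eval a has_derivative (\<lambda>h. \<Sum>k\<in>UNIV. mono_pderiv a k x * h$k)) (at x)"
proof -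
  have d: "\<And>k. ((\<lambda>y::real^'n. (y$k)^(a k)) has_derivative (\<lambda>h. of_nat (a k) * h$k * (x$k)^(a k - 1))) (at x)"
    by (rule has_derivative_power) (rule bounded_linear_imp_has_derivative[OF bounded_linear_vec_nth])
  have "((\<lambda>y. \<Prod>k\<in>UNIV. (y$k)^(a k)) has_derivative
     (\<lambda>h. \<Sum>k\<in>UNIV. (of_nat (a k) * h$k * (x$k)^(a k - 1)) * (\<Prod>j\<in>UNIV - {k}. (x$j)^(a j)))) (at x)"
    by (rule has_derivative_prod) (rule d)
  moreover have "(\<lambda>h. \<Sum>k\<in>UNIV. (of_nat (a k) * h$k * (x$k)^(a k - 1)) * (\<Prod>j\<in>UNIV - {k}. (x$j)^(a j)))
     = (\<lambda>h. \<Sum>k\<in>UNIV. mono_pderiv a k x * h$k)"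
    by (auto simp: mono_pderiv_def intro!: ext sum.cong)
  ultimately show ?thesis unfolding mono_eval_def[abs_def] by simp
qed

lemma poly_eval_deriv:
  fixes g :: "('n::finite) mpoly"
  shows "(poly_eval g has_derivative (\<lambda>h. poly_grad g x \<bullet> h)) (at x)"
proof -
  have "((\<lambda>y. \<Sum>a\<in>supp g. g a * mono_eval a y) has_derivative
      (\<lambda>h. \<Sum>a\<in>supp g. g a * (\<Sum>k\<in>UNIV. mono_pderiv a k x * h$k))) (at x)"
    by (intro has_derivative_sum has_derivative_mult_right mono_eval_deriv)
  moreover have "(\<lambda>h. \<Sum>a\<in>supp g. g a * (\<Sum>k\<in>UNIV. mono_pderiv a k x * h$k)) = (\<lambda>h. poly_grad g x \<bullet> h)"
    apply (rule ext)
    apply (simp add: poly_grad_def inner_vec_def sum_distrib_left sum_distrib_right)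
    apply (subst sum.swap)
    apply (simp add: mult.assoc)
    done
  ultimately show ?thesis unfolding poly_eval_def[abs_def] by simp
qed



lemma eval_norm_vec: "eval_norm g Y = norm (\<chi> i. poly_eval g (Y i))"
  by (simp add: eval_norm_def norm_vec_def L2_set_def)

lemma norm_sq_vec: "(norm (x :: 'a::real_normed_vector^'m::finite))\<^sup>2 = (\<Sum>i\<in>UNIV. (norm (x$i))\<^sup>2)"
  by (simp add: norm_vec_def L2_set_def sum_nonneg)

lemma pmax_ge: "norm (P i) \<le> pmax (P :: 'm::finite \<Rightarrow> real^'n::finite)"
  unfolding pmax_def by (rule Max_ge) auto

lemma pmax_nonneg: "0 \<le> pmax (P :: 'm::finite \<Rightarrow> real^'n::finite)"
  using pmax_ge[of P undefined] norm_ge_zero order_trans by blast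

lemma local_taylor:
  fixes g :: "('n::finite) mpoly"
  assumes "e > 0"
  shows "\<exists>d>0. \<forall>p. norm p < d \<longrightarrow>
     \<bar>poly_eval g (x + p) - poly_eval g x - poly_grad g x \<bullet> p\<bar> \<le> e * norm p"
proof -
  have "((\<lambda>y. norm ((poly_eval g y - poly_eval g x) - poly_grad g x \<bullet> (y - x)) / norm (y - x)) \<longlongrightarrow> 0) (at x)"
    using poly_eval_deriv[of g x] unfolding has_derivative_iff_norm by blast
  then have "eventually (\<lambda>y. dist (norm ((poly_eval g y - poly_eval g x) - poly_grad g x \<bullet> (y - x)) / norm (y - x)) 0 < e) (at x)"
    using assms tendstoD by blast
  then obtain d where d: "d > 0" and H: "\<And>y. y \<noteq> x \<Longrightarrow> dist y x < d \<Longrightarrow>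
      dist (norm ((poly_eval g y - poly_eval g x) - poly_grad g x \<bullet> (y - x)) / norm (y - x)) 0 < e"
    unfolding eventually_at by blast
  show ?thesis
  proof (intro exI[of _ d] conjI allI impI d)
    fix p :: "real^'n" assume p: "norm p < d"
    show "\<bar>poly_eval g (x + p) - poly_eval g x - poly_grad g x \<bullet> p\<bar> \<le> e * norm p"
    proof (cases "p = 0")
      case True then show ?thesis by simp
    next
      case False
      have "x + p \<noteq> x" "dist (x + p) x < d" using False p by (auto simp: dist_norm)
      from H[OF this] have "\<bar>poly_eval g (x + p) - poly_eval g x - poly_grad g x \<bullet> p\<bar> / norm p < e"
        by simp
      then show ?thesis using False by (simp add: divide_less_eq less_imp_le mult.commute)
    qed
  qed
qed

lemma analytic:
  fixes g :: "('n::finite) mpoly" and X :: "'m::finite \<Rightarrow> real^'n"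
  assumes "eval_norm g X \<le> eps"
    and A: "norm (\<chi> i. poly_grad g (X i)) \<le> A"
  shows "\<forall>e>0. \<exists>\<delta>>0. \<forall>P :: 'm \<Rightarrow> real^'n. pmax P < \<delta> \<longrightarrow>
           eval_norm g (\<lambda>i. X i + P i) \<le> eps + pmax P * A + e * pmax P"
proof (intro allI impI)
  fix e :: real assume e: "e > 0"
  define e' where "e' = e / real CARD('m)"
  have e': "e' > 0" using e by (simp add: e'_def)
  have "\<forall>i. \<exists>d>0. \<forall>p. norm p < d \<longrightarrow>
     \<bar>poly_eval g (X i + p) - poly_eval g (X i) - poly_grad g (X i) \<bullet> p\<bar> \<le> e' * norm p"
    using local_taylor[OF e'] by blast
  then obtain d where d: "\<And>i. d i > 0" and dH: "\<And>i p. norm p < d i \<Longrightarrow>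
     \<bar>poly_eval g (X i + p) - poly_eval g (X i) - poly_grad g (X i) \<bullet> p\<bar> \<le> e' * norm p"
    by metis
  define \<delta> where "\<delta> = Min (range d)"
  have \<delta>: "\<delta> > 0" unfolding \<delta>_def using d by (subst Min_gr_iff) auto
  have \<delta>le: "\<And>i. \<delta> \<le> d i" unfolding \<delta>_def by (rule Min_le) auto
  show "\<exists>\<delta>>0. \<forall>P :: 'm \<Rightarrow> real^'n. pmax P < \<delta> \<longrightarrow>
           eval_norm g (\<lambda>i. X i + P i) \<le> eps + pmax P * A + e * pmax P"
  proof (intro exI[of _ \<delta>] conjI allI impI \<delta>)
    fix P :: "'m \<Rightarrow> real^'n" assume P: "pmax P < \<delta>"
    define V0 where "V0 = (\<chi> i. poly_eval g (X i))"
    define V1 where "V1 = (\<chi> i. poly_grad g (X i) \<bullet> P i)"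
    define V2 where "V2 = (\<chi> i. poly_eval g (X i + P i) - poly_eval g (X i) - poly_grad g (X i) \<bullet> P i)"
    have decomp: "(\<chi> i. poly_eval g (X i + P i)) = V0 + V1 + V2"
      by (simp add: V0_def V1_def V2_def vec_eq_iff)
    have n0: "norm V0 \<le> eps" using assms(1) by (simp add: eval_norm_vec V0_def)
    have r: "\<bar>V2 $ i\<bar> \<le> e' * pmax P" for i
    proof -
      have "norm (P i) < d i" using pmax_ge[of P i] P \<delta>le[of i] by linarith
      from dH[OF this] have "\<bar>V2 $ i\<bar> \<le> e' * norm (P i)" by (simp add: V2_def)
      also have "\<dots> \<le> e' * pmax P" using e' pmax_ge[of P i] by simp
      finally show ?thesis .
    qed
    have n2: "norm V2 \<le> e * pmax P"
    proof -
      have "norm V2 \<le> (\<Sum>i\<in>UNIV. \<bar>V2 $ i\<bar>)" by (rule norm_le_l1_cart)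
      also have "\<dots> \<le> (\<Sum>i\<in>(UNIV::'m set). e' * pmax P)" by (rule sum_mono) (rule r)
      also have "\<dots> = e * pmax P" by (simp add: e'_def)
      finally show ?thesis .
    qed
    have n1: "norm V1 \<le> pmax P * A"
    proof -
      have "(norm V1)\<^sup>2 = (\<Sum>i\<in>UNIV. (poly_grad g (X i) \<bullet> P i)\<^sup>2)"
        by (simp add: V1_def norm_vec_def L2_set_def sum_nonneg)
      also have "\<dots> \<le> (\<Sum>i\<in>UNIV. (norm (poly_grad g (X i)))\<^sup>2 * (pmax P)\<^sup>2)"
      proof (rule sum_mono)
        fix i
        have "\<bar>poly_grad g (X i) \<bullet> P i\<bar> \<le> norm (poly_grad g (X i)) * norm (P i)"
          by (rule Cauchy_Schwarz_ineq2)
        also have "\<dots> \<le> norm (poly_grad g (X i)) * pmax P"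
          by (simp add: mult_left_mono pmax_ge)
        finally have "\<bar>poly_grad g (X i) \<bullet> P i\<bar> \<le> norm (poly_grad g (X i)) * pmax P" .
        then have "\<bar>poly_grad g (X i) \<bullet> P i\<bar>\<^sup>2 \<le> (norm (poly_grad g (X i)) * pmax P)\<^sup>2"
          by (rule power_mono) simp
        then show "(poly_grad g (X i) \<bullet> P i)\<^sup>2 \<le> (norm (poly_grad g (X i)))\<^sup>2 * (pmax P)\<^sup>2"
          by (simp add: power_mult_distrib)
      qed
      also have "\<dots> = (norm (\<chi> i. poly_grad g (X i)))\<^sup>2 * (pmax P)\<^sup>2"
        by (simp add: norm_sq_vec sum_distrib_right)
      also have "\<dots> \<le> (A * pmax P)\<^sup>2"
        using A pmax_nonneg[of P] by (simp add: power_mult_distrib mult_right_mono power_mono)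
      finally have "(norm V1)\<^sup>2 \<le> (A * pmax P)\<^sup>2" .
      moreover have "A \<ge> 0" using A norm_ge_zero order_trans by blast
      then have "0 \<le> A * pmax P" using pmax_nonneg[of P] by simp
      ultimately have "norm V1 \<le> A * pmax P" by (rule power2_le_imp_le)
      then show ?thesis by (simp add: mult.commute)
    qed
    have "eval_norm g (\<lambda>i. X i + P i) = norm (V0 + V1 + V2)" by (simp add: eval_norm_vec decomp)
    also have "\<dots> \<le> norm V0 + norm V1 + norm V2" by (meson norm_triangle_le order_refl add_mono)
    also have "\<dots> \<le> eps + pmax P * A + e * pmax P" using n0 n1 n2 by linarith
    finally show "eval_norm g (\<lambda>i. X i + P i) \<le> eps + pmax P * A + e * pmax P" .
  qed
qed



lemma supp_monom: "supp (monom_poly a) = {a}"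
  by (auto simp: supp_def monom_poly_def)

lemma grad_monom: "poly_grad (monom_poly a) x = (\<chi> k. mono_pderiv a k x)"
  unfolding poly_grad_def supp_monom by (simp add: monom_poly_def)

lemma pdv_monom: "poly_deg_var (monom_poly a) k = a k"
  by (simp add: poly_deg_var_def supp_monom)

lemma is_const_monom: "is_constant (monom_poly a) \<longleftrightarrow> a = (\<lambda>_. 0)"
  by (simp add: is_constant_def supp_monom)

lemma grad_norm_nonneg: "grad_norm c X \<ge> 0"
  by (simp add: grad_norm_def sum_nonneg)

lemma gw_monom: "gw_norm (monom_poly a) X = grad_norm (monom_poly a) X"
  using grad_norm_nonneg[of "monom_poly a" X]
  unfolding gw_norm_def supp_monom by (simp add: monom_poly_def)

lemma gt_zero: "(\<chi> i. poly_grad (monom_poly (\<lambda>_. 0)) (X i)) = (0 :: real^'n::finite^'m::finite)"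
  by (simp add: grad_monom mono_pderiv_def vec_eq_iff)

lemma norm_gt:
  fixes X :: "'m::finite \<Rightarrow> real^'n::finite"
  assumes "a \<noteq> (\<lambda>_. 0)"
  shows "norm (\<chi> i. poly_grad (monom_poly a) (X i)) =
     grad_norm (monom_poly a) X * sqrt (\<Sum>k\<in>UNIV. (real (a k))\<^sup>2)"
proof -
  obtain k0 where k0: "a k0 \<noteq> 0" using assms by auto
  have "(\<Sum>k\<in>UNIV. (real (a k))\<^sup>2) \<ge> (real (a k0))\<^sup>2"
    by (rule member_le_sum) auto
  moreover have "(real (a k0))\<^sup>2 > 0" using k0 by simp
  ultimately have pos: "sqrt (\<Sum>k\<in>UNIV. (real (a k))\<^sup>2) > 0"
    by (simp only: real_sqrt_gt_0_iff)
  have "norm (\<chi> i. poly_grad (monom_poly a) (X i)) = sqrt ((norm (\<chi> i. poly_grad (monom_poly a) (X i)))\<^sup>2)"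
    by simp
  also have "\<dots> = sqrt (\<Sum>i\<in>UNIV. (norm (poly_grad (monom_poly a) (X i)))\<^sup>2)"
    by (subst norm_sq_vec) simp
  finally show ?thesis using pos assms
    by (simp add: grad_norm_def is_const_monom pdv_monom)
qed

lemma sqrt_sq_le_tdeg: "sqrt (\<Sum>k\<in>UNIV. (real (a k))\<^sup>2) \<le> real (tdeg (a :: ('n::finite) monom))"
proof -
  have "L2_set (\<lambda>k. real (a k)) UNIV \<le> sum (\<lambda>k. real (a k)) UNIV"
    by (rule L2_set_le_sum) simp
  then show ?thesis by (simp add: L2_set_def tdeg_def)
qed

lemma tdeg_le_deg: "finite (supp g) \<Longrightarrow> a \<in> supp g \<Longrightarrow> tdeg a \<le> poly_deg g"
  unfolding poly_deg_def by (rule Max_ge) auto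

lemma grad_vec_sum:
  fixes X :: "'m::finite \<Rightarrow> real^'n::finite"
  shows "(\<chi> i. poly_grad g (X i)) = (\<Sum>a\<in>supp g. g a *\<^sub>R (\<chi> i. poly_grad (monom_poly a) (X i)))"
  by (simp add: vec_eq_iff sum_component grad_monom) (simp add: poly_grad_def sum_distrib_left)

lemma grad_bound:
  fixes X :: "'m::finite \<Rightarrow> real^'n::finite" and g :: "'n mpoly"
  assumes fin: "finite (supp g)" and gw: "gw_norm g X = 1"
    and card: "card {a\<in>supp g. a \<noteq> (\<lambda>_. 0) \<and> grad_norm (monom_poly a) X \<noteq> 0} \<le> N"
  shows "norm (\<chi> i. poly_grad g (X i)) \<le> real (poly_deg g) * sqrt (real N)"
proof -
  define S where "S = {a\<in>supp g. a \<noteq> (\<lambda>_. 0) \<and> grad_norm (monom_poly a) X \<noteq> 0}"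
  define gn where "gn a = grad_norm (monom_poly a) X" for a
  define D where "D = real (poly_deg g)"
  have SS: "S \<subseteq> supp g" by (auto simp: S_def)
  have finS: "finite S" using fin SS finite_subset by blast
  have termb: "\<bar>g a\<bar> * norm (\<chi> i. poly_grad (monom_poly a) (X i)) \<le> D * (if a \<in> S then \<bar>g a\<bar> * gn a else 0)"
    if a: "a \<in> supp g" for a
  proof (cases "a = (\<lambda>_. 0)")
    case True
    then have nS: "a \<notin> S" unfolding S_def by blast
    have "(\<chi> i. poly_grad (monom_poly a) (X i)) = 0" using True gt_zero[of X] by simp
    then show ?thesis using nS by simp
  next
    case False
    have n: "norm (\<chi> i. poly_grad (monom_poly a) (X i)) = gn a * sqrt (\<Sum>k\<in>UNIV. (real (a k))\<^sup>2)"
      using norm_gt[OF False] by (simp add: gn_def)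
    have le: "sqrt (\<Sum>k\<in>UNIV. (real (a k))\<^sup>2) \<le> D"
      using sqrt_sq_le_tdeg[of a] tdeg_le_deg[OF fin a] by (simp add: D_def)
    have gn0: "gn a \<ge> 0" by (simp add: gn_def grad_norm_nonneg)
    show ?thesis
    proof (cases "gn a = 0")
      case True then show ?thesis using n by simp
    next
      case F: False
      then have "a \<in> S" using a False by (simp add: S_def gn_def)
      moreover have "\<bar>g a\<bar> * (gn a * sqrt (\<Sum>k\<in>UNIV. (real (a k))\<^sup>2)) \<le> \<bar>g a\<bar> * (gn a * D)"
        using le gn0 by (simp add: mult_left_mono)
      ultimately show ?thesis using n by (simp add: ac_simps)
    qed
  qed
  have "norm (\<chi> i. poly_grad g (X i)) \<le> (\<Sum>a\<in>supp g. norm (g a *\<^sub>R (\<chi> i. poly_grad (monom_poly a) (X i))))"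
    by (subst grad_vec_sum) (rule norm_sum)
  also have "\<dots> = (\<Sum>a\<in>supp g. \<bar>g a\<bar> * norm (\<chi> i. poly_grad (monom_poly a) (X i)))"
    by simp
  also have "\<dots> \<le> (\<Sum>a\<in>supp g. D * (if a \<in> S then \<bar>g a\<bar> * gn a else 0))"
    by (rule sum_mono) (rule termb)
  also have "\<dots> = D * (\<Sum>a\<in>S. \<bar>g a\<bar> * gn a)"
    using fin SS by (simp add: sum_distrib_left[symmetric] sum.If_cases Int_absorb1)
  also have "\<dots> \<le> D * sqrt (real N)"
  proof (rule mult_left_mono)
    show "0 \<le> D" by (simp add: D_def)
    have "(\<Sum>a\<in>S. \<bar>g a\<bar> * gn a)\<^sup>2 \<le> (\<Sum>a\<in>S. (\<bar>g a\<bar> * gn a)\<^sup>2) * card S"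
      by (rule sum_squared_le_sum_of_squares)
    also have "\<dots> \<le> 1 * real N"
    proof (rule mult_mono)
      have "(\<Sum>a\<in>S. (\<bar>g a\<bar> * gn a)\<^sup>2) \<le> (\<Sum>a\<in>supp g. (g a)\<^sup>2 * (gn a)\<^sup>2)"
      proof -
        have "(\<Sum>a\<in>S. (\<bar>g a\<bar> * gn a)\<^sup>2) = (\<Sum>a\<in>S. (g a)\<^sup>2 * (gn a)\<^sup>2)"
          by (simp add: power_mult_distrib)
        also have "\<dots> \<le> (\<Sum>a\<in>supp g. (g a)\<^sup>2 * (gn a)\<^sup>2)"
          using fin SS by (intro sum_mono2) auto
        finally show ?thesis .
      qed
      also have "\<dots> = (gw_norm g X)\<^sup>2"
        by (simp add: gw_norm_def gn_def sum_nonneg)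
      finally show "(\<Sum>a\<in>S. (\<bar>g a\<bar> * gn a)\<^sup>2) \<le> 1" using gw by simp
      show "real (card S) \<le> real N" using card by (simp add: S_def)
    qed auto
    finally have "(\<Sum>a\<in>S. \<bar>g a\<bar> * gn a)\<^sup>2 \<le> real N" by simp
    then show "(\<Sum>a\<in>S. \<bar>g a\<bar> * gn a) \<le> sqrt (real N)" by (rule real_le_rsqrt)
  qed
  finally show ?thesis by (simp add: D_def)
qed



definition evv :: "('m::finite \<Rightarrow> real^'n::finite) \<Rightarrow> 'n monom \<Rightarrow> real^'m" where
  "evv X a = (\<chi> i. mono_eval a (X i))"

definition QQ :: "('m::finite \<Rightarrow> real^'n::finite) \<Rightarrow> 'n monom set \<Rightarrow> 'n monom set" where
  "QQ X Os = {a\<in>Os. a = (\<lambda>_. 0) \<or> grad_norm (monom_poly a) X \<noteq> 0}"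

definition Inv :: "('m::finite \<Rightarrow> real^'n::finite) \<Rightarrow> 'n monom set \<Rightarrow> bool" where
  "Inv X Os \<longleftrightarrow> finite Os \<and> (\<lambda>_. 0) \<in> Os \<and> independent (evv X ` QQ X Os) \<and> inj_on (evv X) (QQ X Os)"

definition good :: "('m::finite \<Rightarrow> real^'n::finite) \<Rightarrow> real \<Rightarrow> 'n mpoly \<Rightarrow> bool" where
  "good X eps g \<longleftrightarrow> finite (supp g) \<and> eval_norm g X \<le> eps \<and>
     card {a\<in>supp g. a \<noteq> (\<lambda>_. 0) \<and> grad_norm (monom_poly a) X \<noteq> 0} \<le> CARD('m)"

lemma Inv_init: "Inv X {(\<lambda>_. 0)}"
proof -
  have "QQ X {(\<lambda>_. 0)} = {(\<lambda>_. 0)}" by (auto simp: QQ_def)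
  moreover have "evv X (\<lambda>_. 0) \<noteq> 0" by (simp add: evv_def mono_eval_def vec_eq_iff)
  ultimately show ?thesis
    by (simp add: Inv_def independent_insert)
qed

lemma card_QQ:
  fixes X :: "'m::finite \<Rightarrow> real^'n::finite"
  assumes "Inv X Os" shows "card (QQ X Os) \<le> CARD('m::finite)"
proof -
  have "card (QQ X Os) = card (evv X ` QQ X Os)"
    using assms by (simp add: Inv_def card_image)
  also have "\<dots> \<le> DIM(real^'m)"
    using assms independent_bound[of "evv X ` QQ X Os"] by (auto simp: Inv_def)
  finally show ?thesis by simp
qed

lemma sum_swap3: "(\<Sum>i\<in>I. \<Sum>u\<in>U. \<Sum>w\<in>W. F i u w) = (\<Sum>u\<in>U. \<Sum>w\<in>W. \<Sum>i\<in>I. F i u w)"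
  by (subst sum.swap) (rule sum.cong[OF refl], rule sum.swap)

lemma step_G:
  fixes X :: "'m::finite \<Rightarrow> real^'n::finite"
  assumes inv: "Inv X Os" and mge: "min_gen_eig X (insert b Os) lam v" and le: "sqrt lam \<le> eps"
  shows "good X eps (\<lambda>a. if a \<in> insert b Os then v a else 0)"
proof -
  define T where "T = insert b Os"
  define g where "g = (\<lambda>a. if a \<in> T then v a else 0)"
  have finT: "finite T" using inv by (simp add: Inv_def T_def)
  have suppT: "supp g \<subseteq> T" by (auto simp: supp_def g_def)
  have fin: "finite (supp g)" using finT suppT finite_subset by blast
  have ge: "gen_eig X T lam v" using mge by (simp add: min_gen_eig_def T_def)
  have pe: "poly_eval g x = (\<Sum>a\<in>T. v a * mono_eval a x)" for x
  proof -
    have "poly_eval g x = (\<Sum>a\<in>T. g a * mono_eval a x)"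
      unfolding poly_eval_def using finT suppT
      by (intro sum.mono_neutral_left) (auto simp: supp_def)
    then show ?thesis by (simp add: g_def)
  qed
  have "(\<Sum>i\<in>UNIV. (poly_eval g (X i))\<^sup>2)
      = (\<Sum>i\<in>UNIV. \<Sum>u\<in>T. \<Sum>w\<in>T. v u * (mono_eval u (X i) * mono_eval w (X i)) * v w)"
    by (simp add: pe power2_eq_square sum_product ac_simps)
  also have "\<dots> = (\<Sum>u\<in>T. \<Sum>w\<in>T. \<Sum>i\<in>UNIV. v u * (mono_eval u (X i) * mono_eval w (X i)) * v w)"
    by (rule sum_swap3)
  also have "\<dots> = (\<Sum>u\<in>T. v u * (\<Sum>w\<in>T. (\<Sum>i\<in>UNIV. mono_eval u (X i) * mono_eval w (X i)) * v w))"
    by (simp add: sum_distrib_left sum_distrib_right mult.assoc)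
  also have "\<dots> = (\<Sum>u\<in>T. v u * (lam * (gw_norm (monom_poly u) X)\<^sup>2 * v u))"
    using ge by (simp add: gen_eig_def)
  also have "\<dots> = lam * (\<Sum>u\<in>T. (gw_norm (monom_poly u) X)\<^sup>2 * (v u)\<^sup>2)"
    by (simp add: sum_distrib_left power2_eq_square ac_simps)
  also have "\<dots> = lam" using ge by (simp add: gen_eig_def)
  finally have "eval_norm g X = sqrt lam" by (simp add: eval_norm_def)
  then have ev: "eval_norm g X \<le> eps" using le by simp
  have sub: "{a\<in>supp g. a \<noteq> (\<lambda>_. 0) \<and> grad_norm (monom_poly a) X \<noteq> 0} \<subseteq> insert b (QQ X Os - {(\<lambda>_. 0)})"
    using suppT by (auto simp: QQ_def T_def)
  have finQ: "finite (QQ X Os)" using inv by (simp add: Inv_def QQ_def)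
  have z: "(\<lambda>_. 0) \<in> QQ X Os" using inv by (simp add: Inv_def QQ_def)
  have "card {a\<in>supp g. a \<noteq> (\<lambda>_. 0) \<and> grad_norm (monom_poly a) X \<noteq> 0} \<le> card (insert b (QQ X Os - {(\<lambda>_. 0)}))"
    using sub finQ by (intro card_mono) auto
  also have "\<dots> \<le> Suc (card (QQ X Os - {(\<lambda>_. 0)}))" using finQ by (simp add: card_insert_if)
  also have "\<dots> = card (QQ X Os)" using z finQ
  proof -
    have "card (QQ X Os) > 0" using z finQ card_gt_0_iff by blast
    then show ?thesis using z finQ by (simp add: card_Diff_singleton)
  qed
  also have "\<dots> \<le> CARD('m)" by (rule card_QQ[OF inv])
  finally show ?thesis using fin ev by (simp add: good_def g_def T_def)
qed



lemma step_O:
  fixes X :: "'m::finite \<Rightarrow> real^'n::finite"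
  assumes inv: "Inv X Os" and mge: "min_gen_eig X (insert b Os) lam v"
    and nle: "\<not> sqrt lam \<le> eps" and eps: "eps \<ge> 0"
  shows "Inv X (insert b Os)"
proof (cases "b \<in> QQ X (insert b Os) \<and> b \<notin> Os")
  case False
  then have "QQ X (insert b Os) = QQ X Os"
    by (cases "b \<in> Os") (auto simp: QQ_def insert_absorb)
  then show ?thesis using inv by (simp add: Inv_def)
next
  case True
  define Q where "Q = QQ X Os"
  define T where "T = insert b Os"
  have bO: "b \<notin> Os" using True by simp
  have finO: "finite Os" using inv by (simp add: Inv_def)
  have z: "(\<lambda>_. 0) \<in> Os" using inv by (simp add: Inv_def)
  have gnb: "grad_norm (monom_poly b) X \<noteq> 0" using True z by (auto simp: QQ_def)
  have QO: "Q \<subseteq> Os" by (auto simp: Q_def QQ_def)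
  have finQ: "finite Q" using finO QO finite_subset by blast
  have injQ: "inj_on (evv X) Q" using inv by (simp add: Inv_def Q_def)
  have indQ: "independent (evv X ` Q)" using inv by (simp add: Inv_def Q_def)
  have QQ': "QQ X (insert b Os) = insert b Q" using gnb by (auto simp: QQ_def Q_def)
  have nspan: "evv X b \<notin> span (evv X ` Q)"
  proof
    assume "evv X b \<in> span (evv X ` Q)"
    then obtain u where u: "evv X b = (\<Sum>y\<in>evv X ` Q. u y *\<^sub>R y)"
      using span_finite[of "evv X ` Q"] finQ by auto
    also have "\<dots> = (\<Sum>q\<in>Q. u (evv X q) *\<^sub>R evv X q)"
      using injQ by (simp add: sum.reindex)
    finally have u': "evv X b = (\<Sum>q\<in>Q. u (evv X q) *\<^sub>R evv X q)" .
    define w where "w a = (if a = b then 1 else if a \<in> Q then - u (evv X a) else 0)" for a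
    have Z: "(\<Sum>a\<in>T. w a * mono_eval a (X i)) = 0" for i
    proof -
      have eb: "mono_eval b (X i) = (\<Sum>q\<in>Q. u (evv X q) * mono_eval q (X i))"
        using arg_cong[OF u', of "\<lambda>z. z $ i"] by (simp add: sum_component evv_def)
      have "(\<Sum>a\<in>T. w a * mono_eval a (X i)) = w b * mono_eval b (X i) + (\<Sum>a\<in>Os. w a * mono_eval a (X i))"
        using finO bO by (simp add: T_def)
      also have "(\<Sum>a\<in>Os. w a * mono_eval a (X i)) = (\<Sum>a\<in>Q. w a * mono_eval a (X i))"
        using finO QO bO by (intro sum.mono_neutral_right) (auto simp: w_def)
      also have "\<dots> = - (\<Sum>q\<in>Q. u (evv X q) * mono_eval q (X i))"
      proof -
        have "(\<Sum>a\<in>Q. w a * mono_eval a (X i)) = (\<Sum>q\<in>Q. - (u (evv X q) * mono_eval q (X i)))"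
          using bO QO by (intro sum.cong) (auto simp: w_def)
        then show ?thesis by (simp add: sum_negf)
      qed
      finally show ?thesis using eb by (simp add: w_def)
    qed
    define s where "s = (\<Sum>a\<in>T. (gw_norm (monom_poly a) X)\<^sup>2 * (w a)\<^sup>2)"
    have "s \<ge> (gw_norm (monom_poly b) X)\<^sup>2 * (w b)\<^sup>2"
      unfolding s_def using finO by (intro member_le_sum) (auto simp: T_def)
    moreover have "(gw_norm (monom_poly b) X)\<^sup>2 * (w b)\<^sup>2 > 0"
      using gnb by (simp add: gw_monom w_def)
    ultimately have s: "s > 0" by linarith
    define v' where "v' a = w a / sqrt s" for a
    have "gen_eig X T 0 v'"
      unfolding gen_eig_def
    proof
      show "\<forall>u'\<in>T. (\<Sum>w'\<in>T. (\<Sum>i\<in>UNIV. mono_eval u' (X i) * mono_eval w' (X i)) * v' w') =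
          0 * (gw_norm (monom_poly u') X)\<^sup>2 * v' u'"
      proof
        fix u' assume "u' \<in> T"
        have "(\<Sum>w'\<in>T. (\<Sum>i\<in>UNIV. mono_eval u' (X i) * mono_eval w' (X i)) * v' w')
            = (\<Sum>i\<in>UNIV. mono_eval u' (X i) * ((\<Sum>w'\<in>T. w w' * mono_eval w' (X i)) / sqrt s))"
        proof -
          have "(\<Sum>w'\<in>T. (\<Sum>i\<in>UNIV. mono_eval u' (X i) * mono_eval w' (X i)) * v' w')
             = (\<Sum>w'\<in>T. \<Sum>i\<in>UNIV. mono_eval u' (X i) * (w w' * mono_eval w' (X i)) / sqrt s)"
            unfolding v'_def sum_distrib_right
            apply (rule sum.cong[OF refl])
            apply (rule sum.cong[OF refl])
            apply (simp add: mult_ac)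
            done
          also have "\<dots> = (\<Sum>i\<in>UNIV. \<Sum>w'\<in>T. mono_eval u' (X i) * (w w' * mono_eval w' (X i)) / sqrt s)"
            by (rule sum.swap)
          also have "\<dots> = (\<Sum>i\<in>UNIV. mono_eval u' (X i) * ((\<Sum>w'\<in>T. w w' * mono_eval w' (X i)) / sqrt s))"
            by (rule sum.cong[OF refl]) (simp add: sum_distrib_left sum_divide_distrib)
          finally show ?thesis .
        qed
        also have "\<dots> = 0" by (simp add: Z)
        finally show "(\<Sum>w'\<in>T. (\<Sum>i\<in>UNIV. mono_eval u' (X i) * mono_eval w' (X i)) * v' w') =
          0 * (gw_norm (monom_poly u') X)\<^sup>2 * v' u'" by simp
      qed
      have "(\<Sum>u'\<in>T. (gw_norm (monom_poly u') X)\<^sup>2 * (v' u')\<^sup>2) = s / s"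
      proof -
        have "(\<Sum>u'\<in>T. (gw_norm (monom_poly u') X)\<^sup>2 * (v' u')\<^sup>2)
            = (\<Sum>u'\<in>T. (gw_norm (monom_poly u') X)\<^sup>2 * (w u')\<^sup>2 / s)"
          using s by (simp add: v'_def power_divide)
        also have "\<dots> = s / s" unfolding s_def by (rule sum_divide_distrib[symmetric])
        finally show ?thesis .
      qed
      then show "(\<Sum>u'\<in>T. (gw_norm (monom_poly u') X)\<^sup>2 * (v' u')\<^sup>2) = 1" using s by simp
    qed
    then have "lam \<le> 0" using mge unfolding min_gen_eig_def T_def by blast
    then have "sqrt lam \<le> eps" using eps real_sqrt_le_0_iff[of lam] by linarith
    then show False using nle by simp
  qed
  have "independent (insert (evv X b) (evv X ` Q))" by (rule independent_insertI[OF nspan indQ])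
  moreover have "evv X b \<notin> evv X ` Q" using nspan span_base[of "evv X b" "evv X ` Q"] by fast
  moreover have "inj_on (evv X) (insert b Q)"
  proof -
    have "evv X ` (Q - {b}) \<subseteq> evv X ` Q" by (rule image_mono) simp
    then have "evv X b \<notin> evv X ` (Q - {b})" using \<open>evv X b \<notin> evv X ` Q\<close> by (meson subsetD)
    then show ?thesis using injQ by simp
  qed
  ultimately show ?thesis using finO z unfolding Inv_def QQ' image_insert by simp
qed

lemma run_good:
  fixes X :: "'m::finite \<Rightarrow> real^'n::finite"
  assumes "abm_run X eps lt d L Os G Of Gf" and "eps \<ge> 0"
  shows "Inv X Os \<Longrightarrow> \<forall>g\<in>G. good X eps g \<Longrightarrow> \<forall>g\<in>Gf. good X eps g"
  using assms(1)
proof induction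
  case (stop Os d G) then show ?case by simp
next
  case (next_deg Os d G Of Gf) then show ?case by simp
next
  case (add_G b L Os lam v d G Of Gf)
  then show ?case using step_G[of X Os b lam v eps] by simp
next
  case (add_O b L Os lam v d G Of Gf)
  then show ?case using step_O[of X Os b lam v eps] assms(2) by simp
qed


theorem mainTheorem7:
  fixes X :: "'m::finite \<Rightarrow> real^'n::finite"
    and eps :: real
    and lt :: "'n monom \<Rightarrow> 'n monom \<Rightarrow> bool"
    and Os :: "'n monom set" and G :: "'n mpoly set" and g :: "'n mpoly"
  assumes "inj X"
    and "eps \<ge> 0"
    and "deg_compat_term_order lt"
    and "abm_output X eps lt Os G"
    and "g \<in> G"
    and "gw_norm g X = 1"
  shows "\<forall>e>0. \<exists>\<delta>>0. \<forall>P :: 'm \<Rightarrow> real^'n. pmax P < \<delta> \<longrightarrow>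
           eval_norm g (\<lambda>i. X i + P i)
             \<le> eps + pmax P * real (poly_deg g) * sqrt (real (card (range X))) + e * pmax P"
proof -
  have "\<forall>g\<in>G. good X eps g"
    using run_good[of X eps lt 0 "{}" "{(\<lambda>_. 0)}" "{}" Os G] assms(2,4) Inv_init[of X]
    by (simp add: abm_output_def)
  then have gd: "good X eps g" using assms(5) by blast
  have cr: "card (range X) = CARD('m)" using assms(1) by (simp add: card_image)
  have "norm (\<chi> i. poly_grad g (X i)) \<le> real (poly_deg g) * sqrt (real CARD('m))"
    using gd assms(6) by (intro grad_bound) (auto simp: good_def)
  then have A: "norm (\<chi> i. poly_grad g (X i)) \<le> real (poly_deg g) * sqrt (real (card (range X)))"
    by (simp add: cr)
  have ev: "eval_norm g X \<le> eps" using gd by (simp add: good_def)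
  show ?thesis using analytic[OF ev A] by (simp add: mult.assoc)
qed

end
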